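(* For all $a, b \in \mathbb{N}$, $R_\mathrm{cyc}(K_a, S_b) = 1 + (a-1)(b-1)$, where $S_b$ is any star graph of order $b$.
   Context: All graphs are finite, simple and undirected, and a graph of order $n$ has vertex set $\{0,1,\ldots,n-1\}$; $K_n$ is the complete graph on $\{0,\ldots,n-1\}$. A $2$-edge-coloring of $K_n$ assigns each edge a color in $\{1,2\}$. An embedding of $H$ in color $j$ is an injective map $\varphi\colon V(H)\to V(K_n)$ such that every edge $uv$ of $H$ goes to an edge $\{\varphi(u),\varphi(v)\}$ of color $j$; it is increasing up to a cyclic permutation if there exists $t\in V(H)$ such that $(\varphi(t),\ldots,\varphi(|H|-1),\varphi(0),\ldots,\varphi(t-1))$ is increasing. $R_\mathrm{cyc}(H_1,H_2)$ is the smallest $n$ such that every $2$-edge-coloring of $K_n$ admits an embedding of $H_1$ in color $1$ or of $H_2$ in color $2$ that is increasing up to a cyclic permutation. A star graph of order $n$ is a graph on $\{0,\ldots,n-1\}$ in which one vertex (the center, arbitrary) is adjacent to all others and there are no other edges. *)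

theory Defs
  imports Main
begin

text \<open>A finite simple graph of order h on vertex set {0..<h}: pair (order, edge set),
  edges being 2-element subsets of {0..<h}.\<close>
type_synonym graph = "nat \<times> nat set set"

definition is_graph :: "graph \<Rightarrow> bool" where
  "is_graph H \<longleftrightarrow> (\<forall>e\<in>snd H. \<exists>u v. e = {u, v} \<and> u \<noteq> v \<and> u < fst H \<and> v < fst H)"

definition complete_graph :: "nat \<Rightarrow> graph" where
  "complete_graph n = (n, {{u, v} | u v. u < n \<and> v < n \<and> u \<noteq> v})"

definition is_star_graph :: "nat \<Rightarrow> graph \<Rightarrow> bool" where
  "is_star_graph n H \<longleftrightarrow> fst H = n \<and>
     (\<exists>s < n. snd H = {{s, v} | v. v < n \<and> v \<noteq> s})"

definition two_coloring :: "nat \<Rightarrow> (nat set \<Rightarrow> nat) \<Rightarrow> bool" where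
  "two_coloring n c \<longleftrightarrow> (\<forall>u v. u < n \<and> v < n \<and> u \<noteq> v \<longrightarrow> c {u, v} \<in> {1, 2})"

definition embedding :: "graph \<Rightarrow> nat \<Rightarrow> (nat set \<Rightarrow> nat) \<Rightarrow> nat \<Rightarrow> (nat \<Rightarrow> nat) \<Rightarrow> bool" where
  "embedding H n c j \<phi> \<longleftrightarrow> inj_on \<phi> {0..<fst H} \<and> \<phi> ` {0..<fst H} \<subseteq> {0..<n} \<and>
     (\<forall>e\<in>snd H. c (\<phi> ` e) = j)"

definition cyc_increasing :: "nat \<Rightarrow> (nat \<Rightarrow> nat) \<Rightarrow> bool" where
  "cyc_increasing h \<phi> \<longleftrightarrow>
     (\<exists>t < h. \<forall>i j. i < j \<and> j < h \<longrightarrow> \<phi> ((t + i) mod h) < \<phi> ((t + j) mod h))"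

definition cyc_ramsey_prop :: "graph \<Rightarrow> graph \<Rightarrow> nat \<Rightarrow> bool" where
  "cyc_ramsey_prop H1 H2 n \<longleftrightarrow> (\<forall>c. two_coloring n c \<longrightarrow>
     (\<exists>\<phi>. embedding H1 n c 1 \<phi> \<and> cyc_increasing (fst H1) \<phi>) \<or>
     (\<exists>\<phi>. embedding H2 n c 2 \<phi> \<and> cyc_increasing (fst H2) \<phi>))"

definition R_cyc :: "graph \<Rightarrow> graph \<Rightarrow> nat" where
  "R_cyc H1 H2 = (LEAST n. cyc_ramsey_prop H1 H2 n)"

end

theory Submission imports Defs begin
lemma cyc_embed:
  assumes fin: "finite W" and cW: "card W = h" and vW: "v \<in> W" and sh: "s < h"
  shows "\<exists>\<phi>. \<phi> ` {0..<h} = W \<and> inj_on \<phi> {0..<h} \<and> \<phi> s = v \<and> cyc_increasing h \<phi>"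
proof -
  define xs where "xs = sorted_list_of_set W"
  have len: "length xs = h" using cW fin by (simp add: xs_def)
  have setxs: "set xs = W" using fin by (simp add: xs_def)
  have srt: "sorted_wrt (<) xs" by (simp add: xs_def)
  obtain r where r: "r < h" "xs ! r = v" using vW setxs len by (metis in_set_conv_nth)
  define t where "t = (if r \<le> s then s - r else s + h - r)"
  have th: "t < h" using r sh by (auto simp: t_def)
  define \<phi> where "\<phi> j = xs ! ((j + (h - t)) mod h)" for j
  have key: "\<phi> ((t+i) mod h) = xs ! i" if "i < h" for i
  proof -
    have "((t+i) mod h + (h-t)) mod h = (t+i+(h-t)) mod h" by (simp add: mod_add_left_eq)
    also have "t+i+(h-t) = i + h" using th by simp
    also have "(i+h) mod h = i" using that by simp
    finally show ?thesis by (simp add: \<phi>_def)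
  qed
  have phis: "\<phi> s = v"
  proof (cases "r \<le> s")
    case True
    then have "s + (h - t) = r + h" using sh r by (simp add: t_def)
    then show ?thesis using r by (simp add: \<phi>_def)
  next
    case False
    then have "s + (h - t) = r" using sh r by (simp add: t_def)
    then show ?thesis using r by (simp add: \<phi>_def)
  qed
  have hpos: "h > 0" using sh by simp
  have img: "\<phi> ` {0..<h} = W"
  proof
    show "\<phi> ` {0..<h} \<subseteq> W" using hpos len setxs by (auto simp: \<phi>_def)
    show "W \<subseteq> \<phi> ` {0..<h}"
    proof
      fix w assume "w \<in> W"
      then obtain i where i: "i < h" "xs ! i = w" using setxs len by (metis in_set_conv_nth)
      then have "w = \<phi> ((t+i) mod h)" using key by simp
      moreover have "(t+i) mod h \<in> {0..<h}" using hpos by simp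
      ultimately show "w \<in> \<phi> ` {0..<h}" by blast
    qed
  qed
  have inj: "inj_on \<phi> {0..<h}" using img cW by (simp add: inj_on_iff_eq_card)
  have cyc: "cyc_increasing h \<phi>"
    unfolding cyc_increasing_def
  proof (intro exI[of _ t] conjI allI impI)
    show "t < h" by (rule th)
    fix i j assume "i < j \<and> j < h"
    then show "\<phi> ((t + i) mod h) < \<phi> ((t + j) mod h)"
      using key srt len by (simp add: sorted_wrt_nth_less)
  qed
  show ?thesis using img inj phis cyc by blast
qed

lemma greedy:
  fixes c :: "nat set \<Rightarrow> nat" and n b :: nat
  assumes col: "two_coloring n c"
    and deg: "\<And>v. v < n \<Longrightarrow> card {w. w < n \<and> w \<noteq> v \<and> c {v, w} = 2} + 1 \<le> b - 1"
  shows "U \<subseteq> {0..<n} \<Longrightarrow> card U \<ge> m * (b - 1) + 1 \<Longrightarrow>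
    \<exists>C \<subseteq> U. card C = m + 1 \<and> (\<forall>x\<in>C. \<forall>y\<in>C. x \<noteq> y \<longrightarrow> c {x, y} = 1)"
proof (induction m arbitrary: U)
  case 0
  then have "U \<noteq> {}" by (intro notI) simp
  then obtain x where "x \<in> U" by blast
  then show ?case by (intro exI[of _ "{x}"]) auto
next
  case (Suc m)
  have finU: "finite U" using Suc.prems(1) finite_subset by blast
  have "U \<noteq> {}" using Suc.prems(2) by (intro notI) simp
  then obtain x where xU: "x \<in> U" by blast
  have xn: "x < n" using xU Suc.prems(1) by auto
  define N where "N = {w. w < n \<and> w \<noteq> x \<and> c {x, w} = 2}"
  define U' where "U' = U - insert x N"
  have "card (insert x N) \<le> b - 1"
  proof -
    have "finite N" by (simp add: N_def)
    then have "card (insert x N) \<le> card N + 1" by (simp add: card_insert_if)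
    then show ?thesis using deg[OF xn] N_def by simp
  qed
  moreover have "card U \<le> card U' + card (insert x N)"
  proof -
    have "U \<subseteq> U' \<union> insert x N" using U'_def by auto
    then have "card U \<le> card (U' \<union> insert x N)"
      using finU by (intro card_mono) (auto simp: U'_def N_def)
    also have "\<dots> \<le> card U' + card (insert x N)" by (rule card_Un_le)
    finally show ?thesis .
  qed
  ultimately have "card U' \<ge> card U - (b - 1)" by linarith
  then have cU': "card U' \<ge> m * (b - 1) + 1" using Suc.prems(2) by simp
  have U'n: "U' \<subseteq> {0..<n}" using Suc.prems(1) U'_def by auto
  from Suc.IH[OF U'n cU'] obtain C where C: "C \<subseteq> U'" "card C = m + 1"
    "\<forall>x\<in>C. \<forall>y\<in>C. x \<noteq> y \<longrightarrow> c {x, y} = 1" by blast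
  have xC: "x \<notin> C" using C(1) U'_def by auto
  have finC: "finite C" using C(2) by (intro card_ge_0_finite) simp
  have cx: "c {x, y} = 1" if "y \<in> C" for y
  proof -
    have "y \<notin> N" "y \<noteq> x" "y < n" using that C(1) U'_def Suc.prems(1) by auto
    then have "c {x, y} \<noteq> 2" using N_def by auto
    moreover have "c {x, y} \<in> {1, 2}" using col xn \<open>y < n\<close> \<open>y \<noteq> x\<close> unfolding two_coloring_def by auto
    ultimately show ?thesis by auto
  qed
  have "insert x C \<subseteq> U" using C(1) xU U'_def by auto
  moreover have "card (insert x C) = Suc m + 1" using xC finC C(2) by simp
  moreover have "\<forall>u\<in>insert x C. \<forall>w\<in>insert x C. u \<noteq> w \<longrightarrow> c {u, w} = 1"
  proof (intro ballI impI)
    fix u w assume u: "u \<in> insert x C" and w: "w \<in> insert x C" and uw: "u \<noteq> w"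
    show "c {u, w} = 1"
    proof (cases "u = x")
      case True
      then show ?thesis using w uw cx by auto
    next
      case False
      note uF = False
      show ?thesis
      proof (cases "w = x")
        case True
        then have "{u, w} = {x, u}" by auto
        then show ?thesis using u uF cx by auto
      next
        case False
        then show ?thesis using u w uF uw C(3) by auto
      qed
    qed
  qed
  ultimately show ?case by blast
qed


lemma upper:
  assumes a1: "a \<ge> 1" and b1: "b \<ge> 1" and st: "is_star_graph b S"
  shows "cyc_ramsey_prop (complete_graph a) S (1 + (a - 1) * (b - 1))"
  unfolding cyc_ramsey_prop_def
proof (intro allI impI)
  fix c assume col: "two_coloring (1 + (a - 1) * (b - 1)) c"
  define n where "n = 1 + (a - 1) * (b - 1)"
  have col': "two_coloring n c" using col n_def by simp
  define N2 where "N2 v = {w. w < n \<and> w \<noteq> v \<and> c {v, w} = 2}" for v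
  obtain s where s: "s < b" "fst S = b" "snd S = {{s, u} | u. u < b \<and> u \<noteq> s}"
    using st unfolding is_star_graph_def by blast
  show "(\<exists>\<phi>. embedding (complete_graph a) (1 + (a - 1) * (b - 1)) c 1 \<phi> \<and> cyc_increasing (fst (complete_graph a)) \<phi>) \<or>
    (\<exists>\<phi>. embedding S (1 + (a - 1) * (b - 1)) c 2 \<phi> \<and> cyc_increasing (fst S) \<phi>)"
  proof (cases "\<exists>v<n. card (N2 v) \<ge> b - 1")
    case True
    then obtain v where v: "v < n" "card (N2 v) \<ge> b - 1" by blast
    then obtain L where L: "L \<subseteq> N2 v" "card L = b - 1" "finite L"
      using obtain_subset_with_card_n by metis
    define W where "W = insert v L"
    have vL: "v \<notin> L" using L(1) N2_def by auto
    have cW: "card W = b" using vL L b1 W_def by simp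
    have Wn: "W \<subseteq> {0..<n}" using L(1) v(1) W_def N2_def by auto
    obtain \<phi> where phi: "\<phi> ` {0..<b} = W" "inj_on \<phi> {0..<b}" "\<phi> s = v" "cyc_increasing b \<phi>"
      using cyc_embed[of W b v s] L(3) cW s(1) W_def by auto
    have "embedding S n c 2 \<phi>"
      unfolding embedding_def
    proof (intro conjI ballI)
      show "inj_on \<phi> {0..<fst S}" using phi s by simp
      show "\<phi> ` {0..<fst S} \<subseteq> {0..<n}" using phi s Wn by simp
      fix e assume "e \<in> snd S"
      then obtain u where u: "e = {s, u}" "u < b" "u \<noteq> s" using s by blast
      have "\<phi> u \<in> W" using phi(1) u(2) by auto
      moreover have "\<phi> u \<noteq> v" using phi(2,3) u s(1) by (metis atLeastLessThan_iff inj_on_eq_iff zero_le)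
      ultimately have "\<phi> u \<in> N2 v" using L(1) W_def by auto
      then show "c (\<phi> ` e) = 2" using u(1) phi(3) N2_def by simp
    qed
    then show ?thesis using phi(4) s(2) n_def by auto
  next
    case False
    then have deg: "\<And>v. v < n \<Longrightarrow> card {w. w < n \<and> w \<noteq> v \<and> c {v, w} = 2} + 1 \<le> b - 1"
      using N2_def by fastforce
    have "card {0..<n} \<ge> (a - 1) * (b - 1) + 1" using n_def by simp
    from greedy[OF col' deg, OF _ _ this] obtain C where
      C: "C \<subseteq> {0..<n}" "card C = a - 1 + 1" "\<forall>x\<in>C. \<forall>y\<in>C. x \<noteq> y \<longrightarrow> c {x, y} = 1"
      by blast
    have cC: "card C = a" using C(2) a1 by simp
    have finC: "finite C" using C(1) finite_subset by blast
    then obtain x where "x \<in> C" using cC a1 by (metis all_not_in_conv card.empty not_one_le_zero)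
    then obtain \<phi> where phi: "\<phi> ` {0..<a} = C" "inj_on \<phi> {0..<a}" "cyc_increasing a \<phi>"
      using cyc_embed[of C a x 0] finC cC a1 by auto
    have "embedding (complete_graph a) n c 1 \<phi>"
      unfolding embedding_def
    proof (intro conjI ballI)
      show "inj_on \<phi> {0..<fst (complete_graph a)}" using phi by (simp add: complete_graph_def)
      show "\<phi> ` {0..<fst (complete_graph a)} \<subseteq> {0..<n}" using phi C(1) by (simp add: complete_graph_def)
      fix e assume "e \<in> snd (complete_graph a)"
      then obtain u w where uw: "e = {u, w}" "u < a" "w < a" "u \<noteq> w" by (auto simp: complete_graph_def)
      have "\<phi> u \<in> C" "\<phi> w \<in> C" using phi(1) uw by auto
      moreover have "\<phi> u \<noteq> \<phi> w" using phi(2) uw by (metis atLeastLessThan_iff inj_on_eq_iff zero_le)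
      ultimately show "c (\<phi> ` e) = 1" using uw(1) C(3) by simp
    qed
    then show ?thesis using phi(3) n_def by (auto simp: complete_graph_def)
  qed
qed


lemma lower:
  assumes a1: "a \<ge> 1" and b1: "b \<ge> 1" and st: "is_star_graph b S"
    and m: "m \<le> (a - 1) * (b - 1)"
  shows "\<not> cyc_ramsey_prop (complete_graph a) S m"
proof
  assume P: "cyc_ramsey_prop (complete_graph a) S m"
  obtain s where s: "s < b" "fst S = b" "snd S = {{s, u} | u. u < b \<and> u \<noteq> s}"
    using st unfolding is_star_graph_def by blast
  show False
  proof (cases "m = 0")
    case True
    have col: "two_coloring m (\<lambda>_. 1)" using True by (simp add: two_coloring_def)
    note D = P[unfolded cyc_ramsey_prop_def, rule_format, OF col]
    obtain \<phi> where "embedding (complete_graph a) m (\<lambda>_. 1) 1 \<phi> \<or> embedding S m (\<lambda>_. 1) 2 \<phi>"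
      using D by (elim disjE exE conjE) blast+
    then have "\<phi> ` {0..<a} \<subseteq> {} \<or> \<phi> ` {0..<b} \<subseteq> {}"
      using True s(2) by (auto simp: embedding_def complete_graph_def)
    then show False using a1 b1 by auto
  next
    case False
    define k where "k = b - 1"
    have k1: "k \<ge> 1" using False m k_def by (cases "b - 1") auto
    define c where "c e = (if \<forall>x\<in>e. \<forall>y\<in>e. x div k = y div k then 2 else (1::nat))" for e :: "nat set"
    have col: "two_coloring m c" by (simp add: two_coloring_def c_def)
    note D = P[unfolded cyc_ramsey_prop_def, rule_format, OF col]
    obtain \<phi> where "embedding (complete_graph a) m c 1 \<phi> \<or> embedding S m c 2 \<phi>"
      using D by (elim disjE exE conjE) blast+
    then show False
    proof
      assume E: "embedding (complete_graph a) m c 1 \<phi>"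
      define g where "g i = \<phi> i div k" for i
      have "inj_on g {0..<a}"
      proof (rule inj_onI)
        fix i j assume i: "i \<in> {0..<a}" and j: "j \<in> {0..<a}" and gij: "g i = g j"
        show "i = j"
        proof (rule ccontr)
          assume ij: "i \<noteq> j"
          then have "{i, j} \<in> snd (complete_graph a)" using i j by (auto simp: complete_graph_def)
          moreover have "\<forall>e\<in>snd (complete_graph a). c (\<phi> ` e) = 1" using E unfolding embedding_def by blast
          ultimately have "c (\<phi> ` {i, j}) = 1" by blast
          then have c1: "c {\<phi> i, \<phi> j} = 1" by simp
          have "\<forall>x\<in>{\<phi> i, \<phi> j}. \<forall>y\<in>{\<phi> i, \<phi> j}. x div k = y div k" using gij unfolding g_def by simp
          then have "c {\<phi> i, \<phi> j} = 2" unfolding c_def by (rule if_P)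
          then show False using c1 by simp
        qed
      qed
      moreover have "g ` {0..<a} \<subseteq> {0..<a - 1}"
      proof
        fix y assume "y \<in> g ` {0..<a}"
        then obtain i where i: "i < a" "y = g i" by auto
        have "\<phi> ` {0..<a} \<subseteq> {0..<m}" using E by (simp add: embedding_def complete_graph_def)
        then have "\<phi> i < m" using i(1) by (simp add: image_subset_iff)
        then have "\<phi> i < (a - 1) * k" using m k_def by simp
        then have "\<phi> i div k < a - 1" by (simp add: less_mult_imp_div_less)
        then show "y \<in> {0..<a - 1}" using i(2) g_def by simp
      qed
      ultimately have "card {0..<a} \<le> card {0..<a - 1}" by (intro card_inj_on_le) auto
      then show False using a1 by simp
    next
      assume E: "embedding S m c 2 \<phi>"
      define q where "q = \<phi> s div k"
      have "\<phi> ` {0..<b} \<subseteq> {q * k..<q * k + k}"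
      proof
        fix y assume "y \<in> \<phi> ` {0..<b}"
        then obtain u where u: "u < b" "y = \<phi> u" by auto
        have "y div k = q"
        proof (cases "u = s")
          case True then show ?thesis using u q_def by simp
        next
          case False
          then have "{s, u} \<in> snd S" using s u by auto
          moreover have "\<forall>e\<in>snd S. c (\<phi> ` e) = 2" using E unfolding embedding_def by blast
          ultimately have "c (\<phi> ` {s, u}) = 2" by blast
          then have c2: "c {\<phi> s, \<phi> u} = 2" by simp
          have "\<forall>x\<in>{\<phi> s, \<phi> u}. \<forall>y\<in>{\<phi> s, \<phi> u}. x div k = y div k"
          proof (rule ccontr)
            assume "\<not> (\<forall>x\<in>{\<phi> s, \<phi> u}. \<forall>y\<in>{\<phi> s, \<phi> u}. x div k = y div k)"
            then have "c {\<phi> s, \<phi> u} = 1" unfolding c_def by (rule if_not_P)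
            then show False using c2 by simp
          qed
          then have "\<phi> u div k = \<phi> s div k" by blast
          then show ?thesis using u q_def by simp
        qed
        moreover have "y = y div k * k + y mod k" by simp
        moreover have "y mod k < k" using k1 by simp
        ultimately show "y \<in> {q * k..<q * k + k}" by (metis atLeastLessThan_iff le_add1 add_less_cancel_left)
      qed
      then have "card (\<phi> ` {0..<b}) \<le> k" by (metis card_atLeastLessThan card_mono finite_atLeastLessThan add_diff_cancel_left')
      moreover have "card (\<phi> ` {0..<b}) = b" using E s(2) by (simp add: embedding_def card_image)
      ultimately show False using k_def b1 by simp
    qed
  qed
qed

theorem corollary4p26:
  fixes a b :: nat and S :: graph
  assumes "a \<ge> 1" and "b \<ge> 1" and "is_star_graph b S"
  shows "R_cyc (complete_graph a) S = 1 + (a - 1) * (b - 1)"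
  unfolding R_cyc_def
proof (rule Least_equality)
  show "cyc_ramsey_prop (complete_graph a) S (1 + (a - 1) * (b - 1))" using upper assms by blast
  fix y assume "cyc_ramsey_prop (complete_graph a) S y"
  then show "1 + (a - 1) * (b - 1) \<le> y" using lower[OF assms, of y] by linarith
qed

end
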